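(* If $G$ is a conference graph on $n$ vertices, then $\chi_v(\overline{G})=\chi_v(G)=\sqrt{n}=\chi_{sv}(G)=\chi_{sv}(\overline{G})$.
   Context: A conference graph on $n$ vertices ($n\ge5$) is a strongly regular graph with parameters $(n,\tfrac12(n-1),\tfrac14(n-5),\tfrac14(n-1))$, i.e. a $\tfrac12(n-1)$-regular graph on $n$ vertices in which adjacent vertices have exactly $\tfrac14(n-5)$ and distinct nonadjacent vertices exactly $\tfrac14(n-1)$ common neighbours; $\overline{G}$ is the complement. For a graph on $n$ vertices with at least one edge, a vector $t$-coloring ($t\ge2$) assigns unit vectors $u_i\in\mathbb R^n$ to vertices with $u_i^{\mathrm T}u_j\le-\frac1{t-1}$ for every edge $\{i,j\}$, and a strict vector $t$-coloring requires equality on every edge; $\chi_v$ and $\chi_{sv}$ are the smallest $t\ge2$ admitting a vector, resp. strict vector, $t$-coloring. *)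

theory Defs
  imports "HOL-Analysis.Analysis"
begin

text \<open>Simple graphs on the finite vertex type 'n, given by an adjacency relation E.
  The number of vertices is n = CARD('n); vectors live in real^'n, i.e. R^n.\<close>

definition simple_graph :: "('n::finite \<Rightarrow> 'n \<Rightarrow> bool) \<Rightarrow> bool" where
  "simple_graph E \<longleftrightarrow> (\<forall>v w. E v w \<longrightarrow> E w v) \<and> (\<forall>v. \<not> E v v)"

definition graph_complement :: "('n::finite \<Rightarrow> 'n \<Rightarrow> bool) \<Rightarrow> 'n \<Rightarrow> 'n \<Rightarrow> bool" where
  "graph_complement E v w \<longleftrightarrow> v \<noteq> w \<and> \<not> E v w"

definition strongly_regular ::
  "('n::finite \<Rightarrow> 'n \<Rightarrow> bool) \<Rightarrow> real \<Rightarrow> real \<Rightarrow> real \<Rightarrow> bool" where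
  "strongly_regular E k lam mu \<longleftrightarrow>
     simple_graph E \<and>
     (\<forall>v. real (card {w. E v w}) = k) \<and>
     (\<forall>v w. E v w \<longrightarrow> real (card {x. E v x \<and> E w x}) = lam) \<and>
     (\<forall>v w. v \<noteq> w \<and> \<not> E v w \<longrightarrow> real (card {x. E v x \<and> E w x}) = mu)"

definition conference_graph :: "('n::finite \<Rightarrow> 'n \<Rightarrow> bool) \<Rightarrow> bool" where
  "conference_graph E \<longleftrightarrow>
     CARD('n) \<ge> 5 \<and>
     strongly_regular E ((real CARD('n) - 1) / 2) ((real CARD('n) - 5) / 4) ((real CARD('n) - 1) / 4)"

definition vector_coloring ::
  "('n::finite \<Rightarrow> 'n \<Rightarrow> bool) \<Rightarrow> real \<Rightarrow> ('n \<Rightarrow> real^'n) \<Rightarrow> bool" where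
  "vector_coloring E t u \<longleftrightarrow>
     (\<forall>i. norm (u i) = 1) \<and> (\<forall>i j. E i j \<longrightarrow> u i \<bullet> u j \<le> - 1 / (t - 1))"

definition strict_vector_coloring ::
  "('n::finite \<Rightarrow> 'n \<Rightarrow> bool) \<Rightarrow> real \<Rightarrow> ('n \<Rightarrow> real^'n) \<Rightarrow> bool" where
  "strict_vector_coloring E t u \<longleftrightarrow>
     (\<forall>i. norm (u i) = 1) \<and> (\<forall>i j. E i j \<longrightarrow> u i \<bullet> u j = - 1 / (t - 1))"

definition vector_chromatic :: "('n::finite \<Rightarrow> 'n \<Rightarrow> bool) \<Rightarrow> real" where
  "vector_chromatic E = Inf {t. t \<ge> 2 \<and> (\<exists>u. vector_coloring E t u)}"

definition strict_vector_chromatic :: "('n::finite \<Rightarrow> 'n \<Rightarrow> bool) \<Rightarrow> real" where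
  "strict_vector_chromatic E = Inf {t. t \<ge> 2 \<and> (\<exists>u. strict_vector_coloring E t u)}"

end

theory Submission
  imports Defs
begin


lemma delta_sum_l: "(\<Sum>i\<in>UNIV. (if j = i then (1::real) else 0) * f i) = f (j::'n::finite)"
proof -
  have "(\<Sum>i\<in>UNIV. (if j = i then (1::real) else 0) * f i) = (\<Sum>i\<in>UNIV. if j = i then f i else 0)"
    by (rule sum.cong) auto
  then show ?thesis by simp
qed
lemma delta_sum_r: "(\<Sum>i\<in>UNIV. f i * (if i = j then (1::real) else 0)) = f (j::'n::finite)"
proof -
  have "(\<Sum>i\<in>UNIV. f i * (if i = j then (1::real) else 0)) = (\<Sum>i\<in>UNIV. if i = j then f i else 0)"
    by (rule sum.cong) auto
  then show ?thesis by simp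
qed

lemma quad_nonneg:
  fixes a :: "'n::finite \<Rightarrow> 'n \<Rightarrow> real" and x :: "'n \<Rightarrow> real"
  assumes sym: "\<And>i j. a i j = a j i"
    and rows: "\<And>i. (\<Sum>l\<in>UNIV. a i l) = (real CARD('n) - 1) / 2"
    and sq: "\<And>i j. (\<Sum>l\<in>UNIV. a i l * a l j) = (real CARD('n) - 1) / 4 * ((if i = j then 1 else 0) + 1) - a i j"
  shows "(\<Sum>i\<in>UNIV. \<Sum>j\<in>UNIV. a i j * (x i * x j)) + (1 + sqrt (real CARD('n))) / 2 * (\<Sum>i\<in>UNIV. x i * x i) \<ge> 0"
proof -
  define N where "N = real CARD('n)"
  define r where "r = sqrt N"
  have N1: "N \<ge> 1" unfolding N_def by (simp add: Suc_le_eq)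
  have rr: "r * r = N" unfolding r_def using N1 by simp
  have r1: "r \<ge> 1" unfolding r_def using N1 by simp
  define \<sigma> where "\<sigma> = (1 + r) / 2"
  define \<mu> where "\<mu> = (N - 1) / 4"
  define k where "k = (N - 1) / 2"
  define d where "d = (\<lambda>i j::'n. if i = j then (1::real) else 0)"
  define b where "b = (\<lambda>i j. a i j + \<sigma> * d i j)"
  have bsym: "b i j = b j i" for i j unfolding b_def d_def using sym by auto
  have b2: "(\<Sum>i\<in>UNIV. b j i * b i l) = r * b j l + \<mu>" for j l
  proof -
    have "(\<Sum>i\<in>UNIV. b j i * b i l) = (\<Sum>i\<in>UNIV. a j i * a i l + \<sigma> * (d j i * a i l) + \<sigma> * (a j i * d i l) + \<sigma> * \<sigma> * (d j i * d i l))"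
      unfolding b_def by (rule sum.cong) (auto simp: algebra_simps)
    also have "\<dots> = (\<Sum>i\<in>UNIV. a j i * a i l) + \<sigma> * (\<Sum>i\<in>UNIV. d j i * a i l) + \<sigma> * (\<Sum>i\<in>UNIV. a j i * d i l) + \<sigma> * \<sigma> * (\<Sum>i\<in>UNIV. d j i * d i l)"
      by (simp add: sum.distrib sum_distrib_left)
    also have "\<dots> = \<mu> * (d j l + 1) - a j l + 2 * \<sigma> * a j l + \<sigma> * \<sigma> * d j l"
      unfolding d_def delta_sum_l delta_sum_r sq \<mu>_def N_def by simp
    also have "\<dots> = r * b j l + \<mu>"
      unfolding b_def \<sigma>_def \<mu>_def rr[symmetric] by (simp add: field_simps)
    finally show ?thesis .
  qed
  define z where "z = (\<lambda>i. \<Sum>j\<in>UNIV. b i j * x j)"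
  define S where "S = (\<Sum>i\<in>UNIV. x i)"
  define Q where "Q = (\<Sum>i\<in>UNIV. \<Sum>j\<in>UNIV. b i j * (x i * x j))"
  have zsq: "(\<Sum>i\<in>UNIV. z i * z i) = r * Q + \<mu> * S * S"
  proof -
    have "(\<Sum>i\<in>UNIV. z i * z i) = (\<Sum>i\<in>UNIV. \<Sum>j\<in>UNIV. \<Sum>l\<in>UNIV. (b j i * b i l) * (x j * x l))"
      unfolding z_def sum_product using bsym by (auto intro!: sum.cong simp: algebra_simps)
    also have "\<dots> = (\<Sum>j\<in>UNIV. \<Sum>i\<in>UNIV. \<Sum>l\<in>UNIV. (b j i * b i l) * (x j * x l))"
      by (rule sum.swap)
    also have "\<dots> = (\<Sum>j\<in>UNIV. \<Sum>l\<in>UNIV. \<Sum>i\<in>UNIV. (b j i * b i l) * (x j * x l))"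
      by (rule sum.cong[OF refl], rule sum.swap)
    also have "\<dots> = (\<Sum>j\<in>UNIV. \<Sum>l\<in>UNIV. (\<Sum>i\<in>UNIV. b j i * b i l) * (x j * x l))"
      by (simp add: sum_distrib_right)
    also have "\<dots> = (\<Sum>j\<in>UNIV. \<Sum>l\<in>UNIV. r * (b j l * (x j * x l)) + \<mu> * (x j * x l))"
      unfolding b2 by (simp add: algebra_simps)
    also have "\<dots> = r * Q + \<mu> * S * S"
      unfolding Q_def S_def by (simp add: sum.distrib sum_distrib_left sum_product algebra_simps)
    finally show ?thesis .
  qed
  have colsum: "(\<Sum>i\<in>UNIV. b i j) = k + \<sigma>" for j
  proof -
    have "(\<Sum>i\<in>UNIV. b i j) = (\<Sum>i\<in>UNIV. a j i) + \<sigma> * (\<Sum>i\<in>UNIV. d i j)"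
      unfolding b_def using sym by (simp add: sum.distrib sum_distrib_left)
    also have "\<dots> = k + \<sigma>" unfolding rows d_def k_def N_def by simp
    finally show ?thesis .
  qed
  have zsum: "(\<Sum>i\<in>UNIV. z i) = (k + \<sigma>) * S"
  proof -
    have "(\<Sum>i\<in>UNIV. z i) = (\<Sum>j\<in>UNIV. \<Sum>i\<in>UNIV. b i j * x j)"
      unfolding z_def by (rule sum.swap)
    also have "\<dots> = (\<Sum>j\<in>UNIV. (\<Sum>i\<in>UNIV. b i j) * x j)"
      by (simp add: sum_distrib_right)
    also have "\<dots> = (k + \<sigma>) * S"
      unfolding colsum S_def by (simp add: sum_distrib_left)
    finally show ?thesis .
  qed
  define \<gamma> where "\<gamma> = (k + \<sigma>) / N"
  have "0 \<le> (\<Sum>i\<in>UNIV. (z i - \<gamma> * S) * (z i - \<gamma> * S))"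
    by (intro sum_nonneg) simp
  also have "\<dots> = (\<Sum>i\<in>UNIV. z i * z i - (2 * \<gamma> * S) * z i + \<gamma> * \<gamma> * S * S)"
    by (rule sum.cong) (auto simp: algebra_simps)
  also have "\<dots> = (\<Sum>i\<in>UNIV. z i * z i) - (\<Sum>i\<in>UNIV. (2 * \<gamma> * S) * z i) + (\<Sum>i\<in>(UNIV::'n set). \<gamma> * \<gamma> * S * S)"
    by (simp only: sum.distrib sum_subtractf)
  also have "\<dots> = (\<Sum>i\<in>UNIV. z i * z i) - 2 * \<gamma> * S * (\<Sum>i\<in>UNIV. z i) + N * (\<gamma> * \<gamma> * S * S)"
    unfolding N_def sum_distrib_left[symmetric] by simp
  also have "\<dots> = r * Q + (\<mu> - N * \<gamma> * \<gamma>) * (S * S)"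
  proof -
    have Ng: "k + \<sigma> = N * \<gamma>" unfolding \<gamma>_def using N1 by simp
    show ?thesis unfolding zsq zsum Ng by (simp add: algebra_simps)
  qed
  finally have ineq: "0 \<le> r * Q + (\<mu> - N * \<gamma> * \<gamma>) * (S * S)" .
  have ks: "k + \<sigma> = r * (r + 1) / 2"
    unfolding k_def \<sigma>_def rr[symmetric] by (simp add: field_simps)
  have muN: "\<mu> * N = (r - 1) * (r + 1) * (r * r) / 4"
    unfolding \<mu>_def rr[symmetric] by (simp add: field_simps)
  have "\<mu> * N \<le> (k + \<sigma>) * (k + \<sigma>)"
  proof -
    have "(r - 1) * (r + 1) * (r * r) \<le> (r + 1) * (r + 1) * (r * r)"
      using r1 by (intro mult_right_mono mult_right_mono) auto
    then show ?thesis unfolding muN ks by (simp add: field_simps)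
  qed
  moreover have "(k + \<sigma>) * (k + \<sigma>) = N * (N * \<gamma> * \<gamma>)"
    unfolding \<gamma>_def using N1 by (simp add: field_simps)
  ultimately have "\<mu> * N \<le> (N * \<gamma> * \<gamma>) * N" by (simp add: algebra_simps)
  then have "\<mu> \<le> N * \<gamma> * \<gamma>" using N1 by (simp add: mult.commute mult.left_commute)
  then have "(\<mu> - N * \<gamma> * \<gamma>) * (S * S) \<le> 0"
    by (intro mult_nonpos_nonneg) auto
  then have "0 \<le> r * Q" using ineq by linarith
  then have Q0: "0 \<le> Q" using r1 by (simp add: zero_le_mult_iff)
  have "Q = (\<Sum>i\<in>UNIV. \<Sum>j\<in>UNIV. a i j * (x i * x j)) + \<sigma> * (\<Sum>i\<in>UNIV. x i * x i)"
  proof -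
    have "Q = (\<Sum>i\<in>UNIV. \<Sum>j\<in>UNIV. a i j * (x i * x j) + \<sigma> * (d i j * (x i * x j)))"
      unfolding Q_def b_def by (intro sum.cong refl) (simp add: algebra_simps)
    also have "\<dots> = (\<Sum>i\<in>UNIV. \<Sum>j\<in>UNIV. a i j * (x i * x j)) + \<sigma> * (\<Sum>i\<in>UNIV. \<Sum>j\<in>UNIV. d i j * (x i * x j))"
      by (simp add: sum.distrib sum_distrib_left)
    also have "(\<Sum>i\<in>UNIV. \<Sum>j\<in>UNIV. d i j * (x i * x j)) = (\<Sum>i\<in>UNIV. x i * x i)"
      unfolding d_def delta_sum_l by simp
    finally show ?thesis .
  qed
  then show ?thesis using Q0 unfolding \<sigma>_def r_def N_def by simp
qed


lemma quad_nonneg_vec: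
  fixes a :: "'n::finite \<Rightarrow> 'n \<Rightarrow> real" and u :: "'n \<Rightarrow> real^'n"
  assumes sym: "\<And>i j. a i j = a j i"
    and rows: "\<And>i. (\<Sum>l\<in>UNIV. a i l) = (real CARD('n) - 1) / 2"
    and sq: "\<And>i j. (\<Sum>l\<in>UNIV. a i l * a l j) = (real CARD('n) - 1) / 4 * ((if i = j then 1 else 0) + 1) - a i j"
  shows "(\<Sum>i\<in>UNIV. \<Sum>j\<in>UNIV. a i j * (u i \<bullet> u j)) + (1 + sqrt (real CARD('n))) / 2 * (\<Sum>i\<in>UNIV. u i \<bullet> u i) \<ge> 0"
proof -
  define \<sigma> where "\<sigma> = (1 + sqrt (real CARD('n))) / 2"
  have "(\<Sum>i\<in>UNIV. \<Sum>j\<in>UNIV. a i j * (u i \<bullet> u j)) + \<sigma> * (\<Sum>i\<in>UNIV. u i \<bullet> u i)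
     = (\<Sum>c\<in>UNIV. (\<Sum>i\<in>UNIV. \<Sum>j\<in>UNIV. a i j * (u i $ c * u j $ c)) + \<sigma> * (\<Sum>i\<in>UNIV. u i $ c * u i $ c))"
  proof -
    have e1: "(\<Sum>i\<in>UNIV. \<Sum>j\<in>UNIV. a i j * (u i \<bullet> u j)) = (\<Sum>c\<in>UNIV. \<Sum>i\<in>UNIV. \<Sum>j\<in>UNIV. a i j * (u i $ c * u j $ c))"
    proof -
      have "(\<Sum>i\<in>UNIV. \<Sum>j\<in>UNIV. a i j * (u i \<bullet> u j)) = (\<Sum>i\<in>UNIV. \<Sum>j\<in>UNIV. \<Sum>c\<in>UNIV. a i j * (u i $ c * u j $ c))"
        unfolding inner_vec_def by (simp add: sum_distrib_left)
      also have "\<dots> = (\<Sum>i\<in>UNIV. \<Sum>c\<in>UNIV. \<Sum>j\<in>UNIV. a i j * (u i $ c * u j $ c))"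
        by (rule sum.cong[OF refl], rule sum.swap)
      also have "\<dots> = (\<Sum>c\<in>UNIV. \<Sum>i\<in>UNIV. \<Sum>j\<in>UNIV. a i j * (u i $ c * u j $ c))"
        by (rule sum.swap)
      finally show ?thesis .
    qed
    have e2: "(\<Sum>i\<in>UNIV. u i \<bullet> u i) = (\<Sum>c\<in>UNIV. \<Sum>i\<in>UNIV. u i $ c * u i $ c)"
      unfolding inner_vec_def by (simp only: inner_real_def, rule sum.swap)
    show ?thesis unfolding e1 e2 by (simp add: sum.distrib sum_distrib_left)
  qed
  also have "\<dots> \<ge> 0"
    by (intro sum_nonneg quad_nonneg[OF sym rows sq, unfolded \<sigma>_def[symmetric]])
  finally show ?thesis unfolding \<sigma>_def .
qed


lemma div_mul_cancel_t: "(2::real) \<le> t \<Longrightarrow> x / (t - 1) * (t - 1) = x"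
  by simp

lemma conf_lower:
  fixes a :: "'n::finite \<Rightarrow> 'n \<Rightarrow> real" and F :: "'n \<Rightarrow> 'n \<Rightarrow> bool"
  assumes sym: "\<And>i j. a i j = a j i"
    and rows: "\<And>i. (\<Sum>l\<in>UNIV. a i l) = (real CARD('n) - 1) / 2"
    and sq: "\<And>i j. (\<Sum>l\<in>UNIV. a i l * a l j) = (real CARD('n) - 1) / 4 * ((if i = j then 1 else 0) + 1) - a i j"
    and aF: "\<And>i j. a i j = (if F i j then 1 else 0)"
    and t2: "t \<ge> 2"
    and vc: "vector_coloring F t u"
  shows "sqrt (real CARD('n)) \<le> t"
proof -
  define N where "N = real CARD('n)"
  define r where "r = sqrt N"
  have N1: "N \<ge> 1" unfolding N_def by (simp add: Suc_le_eq)
  have rr: "r * r = N" unfolding r_def using N1 by simp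
  have r1: "r \<ge> 1" unfolding r_def using N1 by simp
  have unit: "u i \<bullet> u i = 1" for i using vc unfolding vector_coloring_def by (simp add: norm_eq_1)
  have edge: "F i j \<Longrightarrow> u i \<bullet> u j \<le> - 1 / (t - 1)" for i j using vc unfolding vector_coloring_def by simp
  have Q: "(\<Sum>i\<in>UNIV. \<Sum>j\<in>UNIV. a i j * (u i \<bullet> u j)) + (1 + r) / 2 * N \<ge> 0"
    using quad_nonneg_vec[OF sym rows sq, of u] unfolding unit r_def N_def by simp
  have "(\<Sum>i\<in>UNIV. \<Sum>j\<in>UNIV. a i j * (u i \<bullet> u j)) \<le> (\<Sum>i\<in>UNIV. \<Sum>j\<in>UNIV. a i j * (- 1 / (t - 1)))"
    using edge by (intro sum_mono) (auto simp: aF)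
  also have "\<dots> = N * ((N - 1) / 2) * (- 1 / (t - 1))"
  proof -
    have "(\<Sum>i\<in>UNIV. \<Sum>j\<in>UNIV. a i j * (- 1 / (t - 1))) = (\<Sum>i\<in>(UNIV::'n set). (N - 1) / 2 * (- 1 / (t - 1)))"
      unfolding sum_distrib_right[symmetric] rows N_def ..
    then show ?thesis unfolding N_def by simp
  qed
  finally have "0 \<le> N * ((N - 1) / 2) * (- 1 / (t - 1)) + (1 + r) / 2 * N" using Q by linarith
  then have "0 \<le> N * (((1 + r) / 2) - ((N - 1) / 2) / (t - 1))" by (simp add: algebra_simps)
  then have "0 \<le> ((1 + r) / 2) - ((N - 1) / 2) / (t - 1)" using N1 by (simp add: zero_le_mult_iff)
  then have "(N - 1) / 2 / (t - 1) \<le> (1 + r) / 2" by simp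
  then have "(N - 1) / 2 / (t - 1) * (t - 1) \<le> (1 + r) / 2 * (t - 1)" using t2 by (intro mult_right_mono) auto
  moreover have "(N - 1) / 2 / (t - 1) * (t - 1) = (N - 1) / 2" by (rule div_mul_cancel_t[OF t2])
  ultimately have "(N - 1) / 2 \<le> (1 + r) / 2 * (t - 1)" by linarith
  moreover have "(1 + r) / 2 * (t - 1) = ((r + 1) * (t - 1)) / 2" by simp
  moreover have "(N - 1) / 2 = ((r - 1) * (r + 1)) / 2" unfolding rr[symmetric] by (simp add: algebra_simps)
  ultimately have "(r - 1) * (r + 1) \<le> (r + 1) * (t - 1)" by linarith
  then have "r - 1 \<le> t - 1" using r1 by (simp add: mult.commute)
  then show ?thesis unfolding r_def N_def by simp
qed


lemma conf_upper:
  fixes a :: "'n::finite \<Rightarrow> 'n \<Rightarrow> real" and F :: "'n \<Rightarrow> 'n \<Rightarrow> bool"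
  assumes sym: "\<And>i j. a i j = a j i"
    and rows: "\<And>i. (\<Sum>l\<in>UNIV. a i l) = (real CARD('n) - 1) / 2"
    and sq: "\<And>i j. (\<Sum>l\<in>UNIV. a i l * a l j) = (real CARD('n) - 1) / 4 * ((if i = j then 1 else 0) + 1) - a i j"
    and aF: "\<And>i j. a i j = (if F i j then 1 else 0)"
    and irr: "\<And>i. \<not> F i i"
    and N2: "CARD('n) \<ge> 2"
  shows "\<exists>u. strict_vector_coloring F (sqrt (real CARD('n))) u"
proof -
  define N where "N = real CARD('n)"
  define r where "r = sqrt N"
  have N1: "N \<ge> 2" unfolding N_def using N2 by simp
  have rr: "r * r = N" unfolding r_def using N1 by simp
  have r1: "r > 1" unfolding r_def using N1 by simp
  define \<rho> where "\<rho> = (r - 1) / 2"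
  define k where "k = (N - 1) / 2"
  define \<mu> where "\<mu> = (N - 1) / 4"
  define p where "p = \<mu> + \<rho> * k"
  define c where "c = - (1 + \<rho> + k)"
  define \<kappa> where "\<kappa> = N * (r + 1) / 2"
  define D where "D = p + \<mu>"
  define d where "d = (\<lambda>i j::'n. if i = j then (1::real) else 0)"
  define m where "m = (\<lambda>i j. p * d i j + c * a i j + \<mu>)"
  have msym: "m i j = m j i" for i j unfolding m_def d_def using sym by auto
  have colsum: "(\<Sum>l\<in>UNIV. a l j) = k" for j
    using rows[of j] sym unfolding k_def N_def by simp
  have M2: "(\<Sum>l\<in>UNIV. m i l * m l j) = \<kappa> * m i j" for i j
  proof -
    have "(\<Sum>l\<in>UNIV. m i l * m l j) = (\<Sum>l\<in>UNIV. p * p * (d i l * d l j) + p * c * (d i l * a l j) + p * \<mu> * d i l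
        + c * p * (a i l * d l j) + c * c * (a i l * a l j) + c * \<mu> * a i l
        + \<mu> * p * d l j + \<mu> * c * a l j + \<mu> * \<mu>)"
      unfolding m_def by (rule sum.cong) (auto simp: algebra_simps)
    also have "\<dots> = p * p * (\<Sum>l\<in>UNIV. d i l * d l j) + p * c * (\<Sum>l\<in>UNIV. d i l * a l j) + p * \<mu> * (\<Sum>l\<in>UNIV. d i l)
        + c * p * (\<Sum>l\<in>UNIV. a i l * d l j) + c * c * (\<Sum>l\<in>UNIV. a i l * a l j) + c * \<mu> * (\<Sum>l\<in>UNIV. a i l)
        + \<mu> * p * (\<Sum>l\<in>UNIV. d l j) + \<mu> * c * (\<Sum>l\<in>UNIV. a l j) + \<mu> * \<mu> * N"
      unfolding N_def by (simp add: sum.distrib sum_distrib_left)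
    also have "\<dots> = p * p * d i j + p * c * a i j + p * \<mu>
        + c * p * a i j + c * c * (\<mu> * (d i j + 1) - a i j) + c * \<mu> * k
        + \<mu> * p + \<mu> * c * k + \<mu> * \<mu> * N"
    proof -
      have "(\<Sum>l\<in>UNIV. d i l) = 1" "(\<Sum>l\<in>UNIV. d l j) = 1" unfolding d_def by auto
      moreover have "(\<Sum>l\<in>UNIV. d i l * d l j) = d i j" unfolding d_def delta_sum_l ..
      moreover have "(\<Sum>l\<in>UNIV. d i l * a l j) = a i j" unfolding d_def delta_sum_l ..
      moreover have "(\<Sum>l\<in>UNIV. a i l * d l j) = a i j" unfolding d_def delta_sum_r ..
      moreover have "(\<Sum>l\<in>UNIV. a i l * a l j) = \<mu> * (d i j + 1) - a i j"
        unfolding sq \<mu>_def d_def N_def ..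
      ultimately show ?thesis unfolding colsum rows k_def[symmetric] N_def[symmetric] by simp
    qed
    also have "\<dots> = \<kappa> * m i j"
      unfolding m_def \<kappa>_def p_def c_def \<mu>_def k_def \<rho>_def rr[symmetric]
      by (simp add: field_simps)
    finally show ?thesis .
  qed
  have "D = (N - 1) * (r + 1) / 4" unfolding D_def p_def \<mu>_def \<rho>_def k_def rr[symmetric] by (simp add: field_simps)
  moreover have "(N - 1) * (r + 1) > 0" using N1 r1 by (intro mult_pos_pos) auto
  ultimately have Dpos: "D > 0" by simp
  have kpos: "\<kappa> > 0" unfolding \<kappa>_def using N1 r1 by simp
  define u where "u = (\<lambda>i. (\<chi> l. m l i / sqrt (\<kappa> * D)) :: real^'n)"
  have uu: "u i \<bullet> u j = m i j / D" for i j
  proof -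
    have "u i \<bullet> u j = (\<Sum>l\<in>UNIV. m i l * m l j / (\<kappa> * D))"
      unfolding u_def inner_vec_def inner_real_def
    proof (intro sum.cong refl)
      fix l
      have ss: "sqrt (\<kappa> * D) * sqrt (\<kappa> * D) = \<kappa> * D" using kpos Dpos by simp
      have "m l i / sqrt (\<kappa> * D) * (m l j / sqrt (\<kappa> * D)) = m l i * m l j / (sqrt (\<kappa> * D) * sqrt (\<kappa> * D))"
        by simp
      then show "(\<chi> l. m l i / sqrt (\<kappa> * D)) $ l * (\<chi> l. m l j / sqrt (\<kappa> * D)) $ l = m i l * m l j / (\<kappa> * D)"
        unfolding ss using msym[of l i] by simp
    qed
    also have "\<dots> = (\<Sum>l\<in>UNIV. m i l * m l j) / (\<kappa> * D)" by (simp add: sum_divide_distrib)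
    also have "\<dots> = m i j / D" unfolding M2 using kpos by simp
    finally show ?thesis .
  qed
  have "strict_vector_coloring F r u"
    unfolding strict_vector_coloring_def
  proof (intro conjI allI impI)
    fix i show "norm (u i) = 1" unfolding norm_eq_1 uu m_def d_def D_def using aF[of i i] irr[of i] Dpos unfolding D_def by simp
  next
    fix i j assume Fij: "F i j"
    then have ij: "i \<noteq> j" using irr by auto
    have "u i \<bullet> u j = (c + \<mu>) / D" unfolding uu m_def d_def using ij aF[of i j] Fij by simp
    also have "\<dots> = - 1 / (r - 1)"
    proof -
      have e: "(c + \<mu>) * (r - 1) = - D"
        unfolding D_def p_def c_def \<mu>_def k_def \<rho>_def rr[symmetric] by (simp add: field_simps)
      have "c + \<mu> = (c + \<mu>) * (r - 1) / (r - 1)" using r1 by simp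
      then have "(c + \<mu>) = - D / (r - 1)" unfolding e .
      then show ?thesis using Dpos by simp
    qed
    finally show "u i \<bullet> u j = - 1 / (r - 1)" .
  qed
  then show ?thesis unfolding r_def N_def by blast
qed


lemma conf_chrom:
  fixes a :: "'n::finite \<Rightarrow> 'n \<Rightarrow> real" and F :: "'n \<Rightarrow> 'n \<Rightarrow> bool"
  assumes sym: "\<And>i j. a i j = a j i"
    and rows: "\<And>i. (\<Sum>l\<in>UNIV. a i l) = (real CARD('n) - 1) / 2"
    and sq: "\<And>i j. (\<Sum>l\<in>UNIV. a i l * a l j) = (real CARD('n) - 1) / 4 * ((if i = j then 1 else 0) + 1) - a i j"
    and aF: "\<And>i j. a i j = (if F i j then 1 else 0)"
    and irr: "\<And>i. \<not> F i i"
    and N5: "CARD('n) \<ge> 5"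
  shows "vector_chromatic F = sqrt (real CARD('n)) \<and> strict_vector_chromatic F = sqrt (real CARD('n))"
proof -
  define z where "z = sqrt (real CARD('n))"
  have z2: "z \<ge> 2"
  proof -
    have "sqrt 4 \<le> sqrt (real CARD('n))" using N5 by (subst real_sqrt_le_iff) simp
    then show ?thesis unfolding z_def by simp
  qed
  obtain u where u: "strict_vector_coloring F z u"
    using conf_upper[OF sym rows sq aF irr] N5 unfolding z_def by auto
  have sv: "strict_vector_coloring F t v \<Longrightarrow> vector_coloring F t v" for t v
    unfolding strict_vector_coloring_def vector_coloring_def by auto
  have lb: "t \<ge> 2 \<Longrightarrow> vector_coloring F t v \<Longrightarrow> z \<le> t" for t v
    using conf_lower[OF sym rows sq aF] unfolding z_def by blast
  have "vector_chromatic F = z"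
    unfolding vector_chromatic_def
    by (rule cInf_eq_minimum) (use z2 u sv lb in auto)
  moreover have "strict_vector_chromatic F = z"
    unfolding strict_vector_chromatic_def
    by (rule cInf_eq_minimum) (use z2 u sv lb in auto)
  ultimately show ?thesis unfolding z_def by simp
qed

lemma sum_indicator_card: "(\<Sum>l\<in>(UNIV::'n::finite set). (if P l then 1::real else 0)) = real (card {l. P l})"
  by (simp add: sum.If_cases)

theorem mainTheorem11:
  fixes E :: "'n::finite \<Rightarrow> 'n \<Rightarrow> bool"
  assumes "conference_graph E"
  shows "vector_chromatic (graph_complement E) = vector_chromatic E
       \<and> vector_chromatic E = sqrt (real CARD('n))
       \<and> sqrt (real CARD('n)) = strict_vector_chromatic E
       \<and> strict_vector_chromatic E = strict_vector_chromatic (graph_complement E)"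
proof -
  define N where "N = real CARD('n)"
  have N5: "CARD('n) \<ge> 5" and sr: "strongly_regular E ((N - 1) / 2) ((N - 5) / 4) ((N - 1) / 4)"
    using assms unfolding conference_graph_def N_def by auto
  have Esym: "E v w \<Longrightarrow> E w v" and Eirr: "\<not> E v v" for v w
    using sr unfolding strongly_regular_def simple_graph_def by auto
  have deg: "real (card {w. E v w}) = (N - 1) / 2" for v
    using sr unfolding strongly_regular_def by auto
  have lam: "E v w \<Longrightarrow> real (card {x. E v x \<and> E w x}) = (N - 5) / 4" for v w
    using sr unfolding strongly_regular_def by auto
  have mu: "v \<noteq> w \<Longrightarrow> \<not> E v w \<Longrightarrow> real (card {x. E v x \<and> E w x}) = (N - 1) / 4" for v w
    using sr unfolding strongly_regular_def by auto
  define a where "a = (\<lambda>i j. if E i j then (1::real) else 0)"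
  have asym: "a i j = a j i" for i j unfolding a_def using Esym by auto
  have arows: "(\<Sum>l\<in>UNIV. a i l) = (N - 1) / 2" for i
    unfolding a_def sum_indicator_card deg ..
  have asq: "(\<Sum>l\<in>UNIV. a i l * a l j) = (N - 1) / 4 * ((if i = j then 1 else 0) + 1) - a i j" for i j
  proof -
    have "(\<Sum>l\<in>UNIV. a i l * a l j) = (\<Sum>l\<in>UNIV. if E i l \<and> E j l then 1 else 0)"
      unfolding a_def using Esym by (intro sum.cong) auto
    also have "\<dots> = real (card {l. E i l \<and> E j l})" by (rule sum_indicator_card)
    also have "\<dots> = (N - 1) / 4 * ((if i = j then 1 else 0) + 1) - a i j"
    proof (cases "i = j")
      case True then show ?thesis using deg[of i] Eirr[of i] unfolding a_def by simp
    next
      case False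
      show ?thesis
      proof (cases "E i j")
        case True then show ?thesis using lam[of i j] False unfolding a_def by (simp add: field_simps)
      next
        case F: False then show ?thesis using mu[of i j] False unfolding a_def by simp
      qed
    qed
    finally show ?thesis .
  qed
  have aF: "a i j = (if E i j then 1 else 0)" for i j unfolding a_def ..
  define b where "b = (\<lambda>i j. if graph_complement E i j then (1::real) else 0)"
  define d where "d = (\<lambda>i j::'n. if i = j then (1::real) else 0)"
  have bad: "b i j = 1 - d i j - a i j" for i j
    unfolding b_def d_def a_def graph_complement_def using Eirr by auto
  have bsym: "b i j = b j i" for i j unfolding bad d_def using asym by auto
  have brows: "(\<Sum>l\<in>UNIV. b i l) = (N - 1) / 2" for i
  proof -
    have "(\<Sum>l\<in>UNIV. b i l) = N - (\<Sum>l\<in>UNIV. d i l) - (\<Sum>l\<in>UNIV. a i l)"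
      unfolding bad N_def by (simp add: sum_subtractf)
    also have "(\<Sum>l\<in>UNIV. d i l) = 1" unfolding d_def by simp
    finally show ?thesis using arows[of i] by (simp add: field_simps)
  qed
  have acol: "(\<Sum>l\<in>UNIV. a l j) = (N - 1) / 2" for j using arows[of j] asym by simp
  have bsq: "(\<Sum>l\<in>UNIV. b i l * b l j) = (N - 1) / 4 * ((if i = j then 1 else 0) + 1) - b i j" for i j
  proof -
    have "(\<Sum>l\<in>UNIV. b i l * b l j) = (\<Sum>l\<in>UNIV. 1 - d l j - a l j - d i l + d i l * d l j + d i l * a l j
         - a i l + a i l * d l j + a i l * a l j)"
      unfolding bad by (intro sum.cong refl) (simp add: algebra_simps)
    also have "\<dots> = N - (\<Sum>l\<in>UNIV. d l j) - (\<Sum>l\<in>UNIV. a l j) - (\<Sum>l\<in>UNIV. d i l) + (\<Sum>l\<in>UNIV. d i l * d l j)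
         + (\<Sum>l\<in>UNIV. d i l * a l j) - (\<Sum>l\<in>UNIV. a i l) + (\<Sum>l\<in>UNIV. a i l * d l j) + (\<Sum>l\<in>UNIV. a i l * a l j)"
      unfolding N_def by (simp add: sum.distrib sum_subtractf)
    also have "\<dots> = N - 1 - (N - 1) / 2 - 1 + d i j + a i j - (N - 1) / 2 + a i j
         + ((N - 1) / 4 * (d i j + 1) - a i j)"
    proof -
      have "(\<Sum>l\<in>UNIV. d i l) = 1" "(\<Sum>l\<in>UNIV. d l j) = 1" unfolding d_def by auto
      moreover have "(\<Sum>l\<in>UNIV. d i l * d l j) = d i j" unfolding d_def delta_sum_l ..
      moreover have "(\<Sum>l\<in>UNIV. d i l * a l j) = a i j" unfolding d_def delta_sum_l ..
      moreover have "(\<Sum>l\<in>UNIV. a i l * d l j) = a i j" unfolding d_def delta_sum_r ..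
      ultimately show ?thesis unfolding acol arows asq d_def by simp
    qed
    also have "\<dots> = (N - 1) / 4 * ((if i = j then 1 else 0) + 1) - b i j"
      unfolding bad d_def by (simp add: field_simps)
    finally show ?thesis .
  qed
  have bF: "b i j = (if graph_complement E i j then 1 else 0)" for i j unfolding b_def ..
  have birr: "\<not> graph_complement E i i" for i unfolding graph_complement_def by simp
  have r1: "vector_chromatic E = sqrt N \<and> strict_vector_chromatic E = sqrt N"
    using conf_chrom[OF asym arows[unfolded N_def] asq[unfolded N_def] aF Eirr N5] unfolding N_def .
  have r2: "vector_chromatic (graph_complement E) = sqrt N \<and> strict_vector_chromatic (graph_complement E) = sqrt N"
    using conf_chrom[OF bsym brows[unfolded N_def] bsq[unfolded N_def] bF birr N5] unfolding N_def .
  show ?thesis using r1 r2 unfolding N_def by simp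
qed

end
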